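(* Let $M,b,\gamma$ be positive constants and $M(\delta)=M\exp(b/\delta^{\gamma})$ for $\delta\in(0,\tfrac{\pi}{2})$. Let $\{p_0,p_1,\ldots\}$ be a sequence of complex numbers. If $P_1$ and $P_2$ are functions analytic and single-valued in $S(-\tfrac{\pi}{2},\tfrac{\pi}{2})$ such that for $j=1,2$ there exist positive constants $a_j,\sigma_j,K_j$ (independent of $z,n,\delta$) with $$\Big|P_j(z)-\sum_{k=0}^{n-1}\frac{p_k}{z^{k+1}}\Big|\le K_j\,M(\delta)\,\frac{n!}{a_j^n|z|^{n+1}}$$ for every $\delta\in(0,\tfrac{\pi}{2})$, every integer $n\ge0$, and every $z\in S(-\tfrac{\pi}{2}+\delta,\tfrac{\pi}{2}-\delta)$ with $|z|>\sigma_j$, then $P_1\equiv P_2$ on $S(-\tfrac{\pi}{2},\tfrac{\pi}{2})$.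
   Context: For $\alpha<\beta$, $S(\alpha,\beta)=\{z\in\mathbb{C}:0<|z|<\infty,\ \alpha<\arg z<\beta\}$. *)

theory Defs
  imports "HOL-Complex_Analysis.Complex_Analysis"
begin

text \<open>The argument is the principal one (Arg, values in (-pi,pi]); this is adequate for
  all sectors used here, which lie within (-pi/2, pi/2).\<close>
definition sector :: "real \<Rightarrow> real \<Rightarrow> complex set" where
  "sector \<alpha> \<beta> = {z. z \<noteq> 0 \<and> \<alpha> < Arg z \<and> Arg z < \<beta>}"

definition Mdelta :: "real \<Rightarrow> real \<Rightarrow> real \<Rightarrow> real \<Rightarrow> real" where
  "Mdelta M b \<gamma> \<delta> = M * exp (b / \<delta> powr \<gamma>)"

end

theory Submission
  imports Defs
begin

lemma sector_half: "sector (-pi/2) (pi/2) = {z. 0 < Re z}"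
proof (rule set_eqI)
  fix z :: complex
  have e: "(- pi / 2 < Arg z \<and> Arg z < pi / 2) \<longleftrightarrow> \<bar>Arg z\<bar> < pi / 2" by linarith
  have "0 < Re z \<Longrightarrow> z \<noteq> 0" by auto
  then show "z \<in> sector (-pi/2) (pi/2) \<longleftrightarrow> z \<in> {z. 0 < Re z}"
    unfolding sector_def mem_Collect_eq e using Arg_Re_pos[of z] by blast
qed

lemma fact_bound:
  fixes a r :: real
  assumes "a > 0" "r \<ge> 1"
  assumes n_def: "n = nat \<lfloor>a * r / exp 1\<rfloor>"
  shows "fact n / (a ^ n * r ^ (n+1)) \<le> exp (1 - a * r / exp 1)"
proof -
  have ar: "a * r > 0" using assms by simp
  have n1: "real n \<le> a * r / exp 1" unfolding n_def
    using ar by (simp add: of_nat_nat) 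
  have n2: "a * r / exp 1 < real n + 1" unfolding n_def
    using ar by (simp add: of_nat_nat)
  have "fact n / (a ^ n * r ^ (n+1)) \<le> real (n^n) / (a ^ n * r ^ (n+1))"
    by (intro divide_right_mono) (use fact_le_power[of n] assms(1,2) in auto)
  also have "\<dots> \<le> real (n^n) / (a ^ n * r ^ n)"
  proof (intro divide_left_mono)
    show "a ^ n * r ^ n \<le> a ^ n * r ^ (n+1)"
      using assms by (intro mult_left_mono) (auto intro: power_increasing)
  qed (use assms in auto)
  also have "\<dots> = (real n / (a * r)) ^ n"
    by (simp add: power_divide power_mult_distrib)
  also have "\<dots> \<le> (1 / exp 1) ^ n"
  proof (intro power_mono)
    show "real n / (a * r) \<le> 1 / exp 1" using n1 ar
      by (simp add: divide_simps mult.commute)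
  qed (use ar in auto)
  also have "\<dots> = exp (- real n)"
  proof -
    have "exp (real n) = exp 1 ^ n" using exp_of_nat_mult[of n 1] by simp
    then show ?thesis by (simp add: exp_minus power_one_over inverse_eq_divide)
  qed
  also have "\<dots> \<le> exp (1 - a * r / exp 1)" using n2 by simp
  finally show ?thesis .
qed


lemma v_bound:
  fixes \<beta> e v :: real
  assumes b0: "\<beta> > 0" and b1: "\<beta> \<le> 1/2" and e0: "e > 0" and e1: "e \<le> 1/2"
    and v1: "\<bar>v\<bar> < pi/2" and v2: "\<bar>v + e * sin (\<beta> * v)\<bar> \<le> pi/2"
  shows "\<bar>v\<bar> < pi/2 - e * sin (\<beta> * pi / 4) / 2"
proof -
  have pi3: "pi > 3" by (rule pi_gt3)
  have s0: "sin (\<beta> * pi / 4) > 0" using b0 b1 pi3 by (intro sin_gt_zero) auto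
  have s1: "sin (\<beta> * pi / 4) \<le> 1" by simp
  have "e * sin (\<beta> * pi / 4) \<le> 1/2 * 1"
    using e0 e1 s1 s0 by (intro mult_mono) auto
  then have small: "e * sin (\<beta> * pi / 4) / 2 \<le> 1/4" by simp
  have key: "x < pi/2 - e * sin (\<beta> * pi / 4) / 2"
    if x: "0 \<le> x" "x < pi/2" "x + e * sin (\<beta> * x) \<le> pi/2" for x
  proof (cases "x \<le> pi/4")
    case True then show ?thesis using small pi3 by linarith
  next
    case False
    have "\<beta> * x \<le> 1/2 * (pi/2)" using x b0 b1 by (intro mult_mono) auto
    moreover have "\<beta> * (pi/4) \<le> \<beta> * x" using False b0 by (intro mult_left_mono) auto
    moreover have "0 \<le> \<beta> * (pi/4)" using b0 by simp
    ultimately have "sin (\<beta> * (pi/4)) \<le> sin (\<beta> * x)"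
      by (intro sin_monotone_2pi_le) auto
    then have "e * sin (\<beta> * pi / 4) \<le> e * sin (\<beta> * x)" using e0 by (intro mult_left_mono) auto
    moreover have "e * sin (\<beta> * pi / 4) > 0" using s0 e0 by simp
    ultimately show ?thesis using x by linarith
  qed
  have sg: "sin (\<beta> * y) \<ge> 0" if "0 \<le> y" "y < pi/2" for y
  proof (rule sin_ge_zero)
    show "0 \<le> \<beta> * y" using that b0 by simp
    have "\<beta> * y \<le> 1/2 * (pi/2)" using that b0 b1 by (intro mult_mono) auto
    then show "\<beta> * y \<le> pi" using pi3 by linarith
  qed
  show ?thesis
  proof (cases "v \<ge> 0")
    case True
    have "sin (\<beta> * v) \<ge> 0" using sg[of v] True v1 by simp
    then have "e * sin (\<beta> * v) \<ge> 0" using e0 by simp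
    then have "v + e * sin (\<beta> * v) \<le> pi/2" using v2 True by linarith
    then show ?thesis using key[of v] True v1 by linarith
  next
    case False
    have "sin (\<beta> * (-v)) \<ge> 0" using sg[of "-v"] False v1 by simp
    then have "e * sin (\<beta> * (-v)) \<ge> 0" using e0 by (intro mult_nonneg_nonneg) auto
    moreover have "e * sin (\<beta> * (-v)) = - (e * sin (\<beta> * v))" by simp
    ultimately have "(-v) + e * sin (\<beta> * (-v)) \<le> pi/2" using v2 False by linarith
    then show ?thesis using key[of "-v"] False v1 by linarith
  qed
qed


lemma decay_pt:
  fixes f :: "complex \<Rightarrow> complex" and w :: complex
  assumes bound: "\<forall>\<delta> n z. 0 < \<delta> \<and> \<delta> < pi/2 \<and> z \<in> sector (-pi/2 + \<delta>) (pi/2 - \<delta>) \<and> cmod z > \<sigma> \<longrightarrow>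
             cmod (f z) \<le> K * Mdelta M b \<gamma> \<delta> * fact n / (a ^ n * cmod z ^ (n+1))"
    and a0: "a > 0" and K0: "K > 0" and M0: "M > 0"
    and b0: "\<beta> > 0" and b1: "\<beta> \<le> 1/2"
    and u1: "\<sigma> < exp (Re w)" and u2: "1 \<le> exp (Re w)" and u3: "exp (-\<beta> * Re w) \<le> 1/2"
    and u4: "b / (exp (-\<beta> * Re w) * sin (\<beta> * pi / 4) / 2) powr \<gamma> \<le> a / (2 * exp 1) * exp (Re w)"
    and v1: "\<bar>Im w\<bar> < pi/2" and v2: "\<bar>Im w + exp (-\<beta> * Re w) * sin (\<beta> * Im w)\<bar> \<le> pi/2"
  shows "cmod (f (exp w)) \<le> K * M * exp 1 * exp (- (a / (2 * exp 1)) * exp (Re w))"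
proof -
  define u where "u = Re w"
  define v where "v = Im w"
  define r where "r = exp u"
  define \<delta> where "\<delta> = exp (-\<beta> * u) * sin (\<beta> * pi / 4) / 2"
  define \<alpha> where "\<alpha> = a / (2 * exp 1)"
  have pi3: "pi > 3" by (rule pi_gt3)
  have s0: "sin (\<beta> * pi / 4) > 0" using b0 b1 pi3 by (intro sin_gt_zero) auto
  have s1: "sin (\<beta> * pi / 4) \<le> 1" by simp
  have "exp (-\<beta> * u) * sin (\<beta> * pi / 4) \<le> 1/2 * 1"
    using u3 s1 s0 unfolding u_def by (intro mult_mono) auto
  then have d1: "\<delta> \<le> 1/4" unfolding \<delta>_def by simp
  have d0: "\<delta> > 0" unfolding \<delta>_def using s0 by simp
  have vb: "\<bar>v\<bar> < pi/2 - \<delta>"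
    unfolding \<delta>_def v_def u_def
    by (rule v_bound[OF b0 b1 _ u3 v1 v2]) simp
  have Arg: "Arg (exp w) = v" unfolding v_def using v1 pi3 by (intro Arg_exp) auto
  have nz: "cmod (exp w) = r" unfolding r_def u_def by (simp add: norm_exp_eq_Re)
  have ins: "exp w \<in> sector (-pi/2 + \<delta>) (pi/2 - \<delta>)"
    unfolding sector_def using Arg vb by auto
  define n where "n = nat \<lfloor>a * r / exp 1\<rfloor>"
  have "cmod (f (exp w)) \<le> K * Mdelta M b \<gamma> \<delta> * fact n / (a ^ n * cmod (exp w) ^ (n+1))"
    using d0 d1 pi3 ins u1 nz unfolding r_def u_def by (intro bound[rule_format, of \<delta> "exp w" n]) auto
  also have "\<dots> = K * Mdelta M b \<gamma> \<delta> * (fact n / (a ^ n * r ^ (n+1)))" using nz by simp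
  also have "\<dots> \<le> K * (M * exp (\<alpha> * r)) * exp (1 - a * r / exp 1)"
  proof (rule mult_mono)
    show "fact n / (a ^ n * r ^ (n + 1)) \<le> exp (1 - a * r / exp 1)"
      using fact_bound[OF a0, of r n] u2 n_def unfolding r_def u_def by simp
    show "K * Mdelta M b \<gamma> \<delta> \<le> K * (M * exp (\<alpha> * r))"
      unfolding Mdelta_def using K0 M0 u4 unfolding \<alpha>_def r_def \<delta>_def u_def
      by (intro mult_left_mono) (auto simp: mult.commute)
  qed (use K0 M0 a0 in \<open>auto simp: r_def\<close>)
  also have "\<dots> = K * M * exp 1 * exp (- \<alpha> * r)"
  proof -
    have "\<alpha> * r + (1 - a * r / exp 1) = 1 + (- \<alpha> * r)" unfolding \<alpha>_def by (simp add: field_simps)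
    then have "exp (\<alpha> * r) * exp (1 - a * r / exp 1) = exp 1 * exp (- \<alpha> * r)"
      by (metis exp_add)
    then show ?thesis by (simp add: mult.assoc)
  qed
  finally show ?thesis unfolding \<alpha>_def r_def u_def .
qed


lemma tau_facts:
  fixes \<tau> :: real assumes "\<bar>\<tau>\<bar> \<le> pi/2"
  shows "0 \<le> cos \<tau>" "cos \<tau> \<le> 1" "0 \<le> \<tau> * sin \<tau>" "\<tau> * sin \<tau> \<le> pi/2"
proof -
  show "0 \<le> cos \<tau>" using assms by (intro cos_ge_zero) auto
  show "cos \<tau> \<le> 1" by simp
  have "\<tau> * sin \<tau> = \<bar>\<tau>\<bar> * sin \<bar>\<tau>\<bar>" by (cases "\<tau> \<ge> 0") auto
  moreover have "0 \<le> sin \<bar>\<tau>\<bar>" using assms pi_gt3 by (intro sin_ge_zero) auto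
  moreover have "sin \<bar>\<tau>\<bar> \<le> 1" by simp
  ultimately show "0 \<le> \<tau> * sin \<tau>" "\<tau> * sin \<tau> \<le> pi/2"
    using assms mult_mono[of "\<bar>\<tau>\<bar>" "pi/2" "sin \<bar>\<tau>\<bar>" 1] by auto
qed

lemma real_case:
  fixes \<rho> \<tau> u U uL A \<alpha> K0 C3 :: real
  assumes r1: "\<rho> \<le> u" and r2: "u - 1/2 \<le> \<rho>" and u1: "uL \<le> u" and u2: "u \<le> U"
    and t: "\<bar>\<tau>\<bar> \<le> pi/2" and A: "A = \<alpha> / pi" and al: "\<alpha> > 0"
    and K0: "K0 = ln C3 + A * exp uL * (U - uL + 3)"
    and cases: "u = uL \<or> u = U \<or> \<bar>\<tau>\<bar> = pi/2"
  shows "ln C3 - \<alpha> * exp u \<le> K0 + A * (exp \<rho> * ((\<rho> - U) * cos \<tau> - \<tau> * sin \<tau>))"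
proof -
  note tf = tau_facts[OF t]
  have pi3: "pi > 3" by (rule pi_gt3)
  have A0: "A > 0" using A al by simp
  have Api: "A * pi = \<alpha>" using A by simp
  have eru: "exp \<rho> \<le> exp u" using r1 by simp
  have K0ge: "K0 \<ge> ln C3" unfolding K0 using A0 u1 u2 by simp
  define X where "X = (\<rho> - U) * cos \<tau> - \<tau> * sin \<tau>"
  have X1: "X \<ge> (\<rho> - U) - pi/2"
  proof -
    have "(\<rho> - U) * cos \<tau> \<ge> (\<rho> - U)"
      using mult_left_mono_neg[of "cos \<tau>" 1 "\<rho> - U"] tf r1 u2 by simp
    then show ?thesis unfolding X_def using tf by linarith
  qed
  from cases consider "\<bar>\<tau>\<bar> = pi/2" | "u = U" | "u = uL" by blast
  then show ?thesis
  proof cases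
    case 1
    have "\<tau> = pi/2 \<or> \<tau> = - (pi/2)" using 1 by linarith
    then have "cos \<tau> = 0 \<and> \<tau> * sin \<tau> = pi/2"
    proof
      assume h: "\<tau> = pi/2" show ?thesis unfolding h by simp
    next
      assume h: "\<tau> = - (pi/2)" show ?thesis unfolding h by simp
    qed
    then have "cos \<tau> = 0" "\<tau> * sin \<tau> = pi/2" by auto
    then have "X = - (pi/2)" unfolding X_def by simp
    then have "A * (exp \<rho> * X) = - (A * pi/2) * exp \<rho>" by simp
    then have "A * (exp \<rho> * X) = - (\<alpha>/2) * exp \<rho>" using Api by simp
    moreover have "(\<alpha>/2) * exp \<rho> \<le> \<alpha> * exp u"
    proof -
      have "\<alpha> * exp \<rho> \<le> \<alpha> * exp u" using eru al by (intro mult_left_mono) auto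
      moreover have "\<alpha> * exp \<rho> > 0" using al by simp
      moreover have "(\<alpha>/2) * exp \<rho> = (\<alpha> * exp \<rho>)/2" by simp
      ultimately show ?thesis by linarith
    qed
    ultimately show ?thesis using K0ge unfolding X_def by linarith
  next
    case 2
    have "X \<ge> - pi" using X1 r2 2 pi3 by linarith
    then have "exp \<rho> * X \<ge> exp \<rho> * (-pi)" by (intro mult_left_mono) auto
    then have "A * (exp \<rho> * X) \<ge> A * (exp \<rho> * (-pi))" by (rule mult_left_mono) (use A0 in simp)
    moreover have "A * (exp \<rho> * (-pi)) = - \<alpha> * exp \<rho>" using Api by (simp add: field_simps)
    moreover have "\<alpha> * exp \<rho> \<le> \<alpha> * exp u" using eru al by (intro mult_left_mono) auto
    ultimately show ?thesis using K0ge unfolding X_def by linarith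
  next
    case 3
    have "X \<ge> - (U - uL + 3)" using X1 r2 3 pi_less_4 by linarith
    then have "exp \<rho> * X \<ge> exp \<rho> * (- (U - uL + 3))" by (intro mult_left_mono) auto
    moreover have "exp \<rho> * (U - uL + 3) \<le> exp uL * (U - uL + 3)"
      using r1 3 u1 u2 by (intro mult_right_mono) auto
    ultimately have "exp \<rho> * X \<ge> - (exp uL * (U - uL + 3))" by linarith
    then have "A * (exp \<rho> * X) \<ge> A * (- (exp uL * (U - uL + 3)))" by (rule mult_left_mono) (use A0 in simp)
    moreover have "\<alpha> * exp u \<ge> 0" using al by simp
    moreover have "A * (- (exp uL * (U - uL + 3))) = - (A * exp uL * (U - uL + 3))" by simp
    ultimately show ?thesis unfolding K0 X_def by linarith
  qed
qed


lemma Re_H_formula: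
  fixes p :: complex and K0 A U :: real
  shows "Re (of_real K0 + of_real A * (p - of_real U) * exp p) =
         K0 + A * (exp (Re p) * ((Re p - U) * cos (Im p) - Im p * sin (Im p)))"
  by (simp add: Re_exp Im_exp algebra_simps)

lemma phi_parts:
  fixes w :: complex and \<beta> :: real
  shows "Im (w - exp (- (of_real \<beta> * w))) = Im w + exp (-\<beta> * Re w) * sin (\<beta> * Im w)"
    and "Re (w - exp (- (of_real \<beta> * w))) = Re w - exp (-\<beta> * Re w) * cos (\<beta> * Im w)"
  by (simp_all add: Re_exp Im_exp)


lemma maxmod:
  fixes F :: "complex \<Rightarrow> complex" and \<beta> uL C3 \<alpha> u1 U :: real
  assumes holF: "F holomorphic_on {w. \<bar>Im w\<bar> < pi/2}"
    and b0: "\<beta> > 0" and b1: "\<beta> \<le> 1/2"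
    and uLe: "exp (-\<beta> * uL) \<le> 1/2"
    and dec: "\<And>w. uL \<le> Re w \<Longrightarrow> \<bar>Im w\<bar> < pi/2 \<Longrightarrow> \<bar>Im (w - exp (- (of_real \<beta> * w)))\<bar> \<le> pi/2
               \<Longrightarrow> cmod (F w) \<le> C3 * exp (-\<alpha> * exp (Re w))"
    and C3: "C3 > 0" and al: "\<alpha> > 0"
    and u1: "uL + 1 \<le> u1" and U: "u1 < U"
  shows "cmod (F (of_real u1)) \<le> exp (ln C3 + \<alpha>/pi * (exp uL * (U - uL + 3)
            + exp (u1 - exp (-\<beta>*u1)) * ((u1 - exp (-\<beta>*u1)) - U)))"
proof -
  define \<phi> where "\<phi> = (\<lambda>w::complex. w - exp (- (of_real \<beta> * w)))"
  define A where "A = \<alpha> / pi"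
  define K0 where "K0 = ln C3 + A * exp uL * (U - uL + 3)"
  define H where "H = (\<lambda>w. of_real K0 + of_real A * (\<phi> w - of_real U) * exp (\<phi> w))"
  define Q where "Q = (\<lambda>w. F w * exp (- H w))"
  define St where "St = {w::complex. \<bar>Im w\<bar> < pi/2}"
  define D where "D = {w. uL < Re w \<and> Re w < U \<and> \<bar>Im w\<bar> < pi/2 \<and> \<bar>Im (\<phi> w)\<bar> < pi/2}"
  define T where "T = {w. uL \<le> Re w \<and> Re w \<le> U \<and> \<bar>Im w\<bar> \<le> pi/2 \<and> \<bar>Im (\<phi> w)\<bar> \<le> pi/2}"
  have pi3: "pi > 3" by (rule pi_gt3)
  have Imphi: "Im (\<phi> w) = Im w + exp (-\<beta> * Re w) * sin (\<beta> * Im w)" for w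
    unfolding \<phi>_def by (rule phi_parts)
  have Rephi: "Re (\<phi> w) = Re w - exp (-\<beta> * Re w) * cos (\<beta> * Im w)" for w
    unfolding \<phi>_def by (rule phi_parts)
  have holQ: "Q holomorphic_on St"
    unfolding Q_def H_def \<phi>_def St_def by (intro holomorphic_intros holF)
  have contphi: "continuous_on UNIV (\<lambda>w. \<bar>Im (\<phi> w)\<bar>)"
    unfolding \<phi>_def by (intro continuous_intros)
  have openD: "open D"
    unfolding D_def
    by (intro open_Collect_conj open_Collect_less contphi continuous_intros)
  have closedT: "closed T"
    unfolding T_def
    by (intro closed_Collect_conj closed_Collect_le contphi continuous_intros)
  have DT: "D \<subseteq> T" unfolding D_def T_def by auto
  have clD: "closure D \<subseteq> T" using DT closedT by (rule closure_minimal)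
  have TSt: "\<bar>Im w\<bar> < pi/2" if "w \<in> T" for w
  proof (rule ccontr)
    assume "\<not> \<bar>Im w\<bar> < pi/2"
    then have v: "Im w = pi/2 \<or> Im w = - (pi/2)" using that unfolding T_def by auto
    have e0: "exp (-\<beta> * Re w) > 0" by simp
    have s0: "sin (\<beta> * (pi/2)) > 0" using b0 b1 pi3 by (intro sin_gt_zero) auto
    have "exp (-\<beta> * Re w) * sin (\<beta> * (pi/2)) > 0" using e0 s0 by simp
    then have "\<bar>Im (\<phi> w)\<bar> > pi/2"
      using v unfolding Imphi
    proof (elim disjE)
      assume p: "0 < exp (- \<beta> * Re w) * sin (\<beta> * (pi / 2))" and h: "Im w = pi/2"
      show "pi / 2 < \<bar>Im w + exp (- \<beta> * Re w) * sin (\<beta> * Im w)\<bar>" unfolding h using p by linarith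
    next
      assume p: "0 < exp (- \<beta> * Re w) * sin (\<beta> * (pi / 2))" and h: "Im w = -(pi/2)"
      have "exp (- \<beta> * Re w) * sin (\<beta> * (-(pi / 2))) = - (exp (- \<beta> * Re w) * sin (\<beta> * (pi / 2)))" by simp
      then show "pi / 2 < \<bar>Im w + exp (- \<beta> * Re w) * sin (\<beta> * Im w)\<bar>" unfolding h using p by linarith
    qed
    then show False using that unfolding T_def by auto
  qed
  have DSt: "D \<subseteq> St" unfolding D_def St_def by auto
  have clSt: "closure D \<subseteq> St" using clD TSt unfolding St_def by auto
  have xiD: "of_real u1 \<in> D" unfolding D_def using u1 U Imphi[of "of_real u1"] by auto
  have bD: "bounded D"
  proof -
    have "norm w \<le> \<bar>uL\<bar> + \<bar>U\<bar> + 2" if "w \<in> D" for w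
    proof -
      have "norm w \<le> \<bar>Re w\<bar> + \<bar>Im w\<bar>" by (rule cmod_le)
      moreover have "\<bar>Re w\<bar> \<le> \<bar>uL\<bar> + \<bar>U\<bar>" using that unfolding D_def by auto
      moreover have "\<bar>Im w\<bar> \<le> 2" using that pi_less_4 unfolding D_def by auto
      ultimately show ?thesis by linarith
    qed
    then show ?thesis unfolding bounded_iff by blast
  qed
  have nq: "cmod (Q w) = cmod (F w) / exp (Re (H w))" for w
    unfolding Q_def by (simp add: norm_mult norm_exp_eq_Re exp_minus norm_divide divide_inverse norm_inverse)
  have front: "cmod (Q z) \<le> 1" if z: "z \<in> frontier D" for z
  proof -
    have zT: "z \<in> T" using z clD unfolding frontier_def by auto
    have znD: "z \<notin> D" using z openD unfolding frontier_def by (simp add: interior_open)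
    define u where "u = Re z"
    define v where "v = Im z"
    define e where "e = exp (-\<beta> * u)"
    have uu: "uL \<le> u" "u \<le> U" using zT unfolding T_def u_def by auto
    have vv: "\<bar>v\<bar> < pi/2" using TSt[OF zT] unfolding v_def .
    have tt: "\<bar>Im (\<phi> z)\<bar> \<le> pi/2" using zT unfolding T_def by auto
    have cs: "u = uL \<or> u = U \<or> \<bar>Im (\<phi> z)\<bar> = pi/2"
      using znD uu vv tt unfolding D_def u_def v_def by auto
    have e0: "0 < e" unfolding e_def by simp
    have e1: "e \<le> 1/2"
    proof -
      have "exp (-\<beta> * u) \<le> exp (-\<beta> * uL)" using uu b0 by simp
      then show ?thesis using uLe unfolding e_def by linarith
    qed
    have c0: "0 \<le> cos (\<beta> * v)"
    proof (rule cos_ge_zero)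
      have "\<bar>\<beta> * v\<bar> \<le> 1/2 * (pi/2)" unfolding abs_mult using b0 b1 vv by (intro mult_mono) auto
      then show "- (pi/2) \<le> \<beta> * v" "\<beta> * v \<le> pi/2" by auto
    qed
    have ec: "e * cos (\<beta> * v) \<le> 1/2 * 1" using e0 e1 c0 by (intro mult_mono) auto
    have ec0: "0 \<le> e * cos (\<beta> * v)" using e0 c0 by simp
    have r1: "Re (\<phi> z) \<le> u" "u - 1/2 \<le> Re (\<phi> z)"
      using ec ec0 unfolding Rephi u_def[symmetric] v_def[symmetric] e_def[symmetric] by auto
    have RH: "ln C3 - \<alpha> * exp u \<le> Re (H z)"
      unfolding H_def Re_H_formula
      by (rule real_case[OF r1 uu tt A_def al K0_def]) (use cs in auto)
    have "cmod (F z) \<le> C3 * exp (-\<alpha> * exp u)"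
      using dec[of z] uu vv tt unfolding u_def v_def \<phi>_def by auto
    also have "\<dots> = exp (ln C3 - \<alpha> * exp u)" using C3 by (simp add: exp_diff exp_minus field_simps)
    also have "\<dots> \<le> exp (Re (H z))" using RH by simp
    finally have "cmod (F z) \<le> exp (Re (H z))" .
    then show ?thesis unfolding nq by simp
  qed
  have "cmod (Q (of_real u1)) \<le> 1"
  proof (rule maximum_modulus_frontier[OF _ _ bD front xiD])
    show "Q holomorphic_on interior D" using holQ DSt openD
      by (simp add: interior_open holomorphic_on_subset)
    show "continuous_on (closure D) Q"
      using holomorphic_on_imp_continuous_on[OF holQ] clSt by (rule continuous_on_subset)
  qed
  then have Fb: "cmod (F (of_real u1)) \<le> exp (Re (H (of_real u1)))"
    unfolding nq by simp
  define \<rho>1 where "\<rho>1 = u1 - exp (-\<beta>*u1)"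
  have "\<phi> (of_real u1) = of_real \<rho>1"
    unfolding \<phi>_def \<rho>1_def by (simp add: exp_of_real[symmetric])
  then have "Re (H (of_real u1)) = K0 + A * (exp \<rho>1 * (\<rho>1 - U))"
    unfolding H_def Re_H_formula by simp
  also have "\<dots> = ln C3 + \<alpha>/pi * (exp uL * (U - uL + 3) + exp \<rho>1 * (\<rho>1 - U))"
    unfolding K0_def A_def by (simp add: algebra_simps add_divide_distrib)
  finally show ?thesis using Fb unfolding \<rho>1_def by simp
qed


lemma thresholds:
  fixes \<sigma> \<beta> \<gamma> b s \<alpha> :: real
  assumes s0: "\<sigma> > 0" and b0: "\<beta> > 0" and g0: "\<gamma> > 0" and bg: "\<beta> * \<gamma> \<le> 1/2"
    and bb: "b > 0" and ss: "s > 0" and al: "\<alpha> > 0"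
  shows "\<exists>uL. \<forall>u\<ge>uL. \<sigma> < exp u \<and> 1 \<le> exp u \<and> exp (-\<beta> * u) \<le> 1/2 \<and>
            b / (exp (-\<beta> * u) * s / 2) powr \<gamma> \<le> \<alpha> * exp u"
proof -
  define B1 where "B1 = b / (s/2) powr \<gamma>"
  have B1: "B1 > 0" unfolding B1_def using bb ss by simp
  define uL where "uL = max (max (ln \<sigma> + 1) 0) (max (ln 2 / \<beta>) (2 * ln (B1 / \<alpha>)))"
  have "\<sigma> < exp u \<and> 1 \<le> exp u \<and> exp (-\<beta> * u) \<le> 1/2 \<and>
            b / (exp (-\<beta> * u) * s / 2) powr \<gamma> \<le> \<alpha> * exp u" if u: "u \<ge> uL" for u
  proof (intro conjI)
    have "ln \<sigma> < u" using u unfolding uL_def by linarith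
    then show "\<sigma> < exp u" using s0 by (metis exp_less_cancel_iff exp_ln)
    have u0: "0 \<le> u" using u unfolding uL_def by linarith
    then show "1 \<le> exp u" by simp
    have "ln 2 / \<beta> \<le> u" using u unfolding uL_def by linarith
    then have "ln 2 \<le> \<beta> * u" using b0 by (simp add: divide_le_eq mult.commute)
    then have "exp (ln 2) \<le> exp (\<beta> * u)" by (simp only: exp_le_cancel_iff)
    then have "2 \<le> exp (\<beta> * u)" by simp
    then show "exp (-\<beta> * u) \<le> 1/2" by (simp add: exp_minus field_simps)
    have "(exp (-\<beta> * u) * s / 2) powr \<gamma> = exp (-\<beta> * u) powr \<gamma> * (s/2) powr \<gamma>"
      by (simp add: powr_mult[symmetric])
    also have "\<dots> = exp (-(\<beta> * \<gamma> * u)) * (s/2) powr \<gamma>" by (simp add: exp_powr_real mult_ac)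
    finally have P: "(exp (-\<beta> * u) * s / 2) powr \<gamma> = exp (-(\<beta> * \<gamma> * u)) * (s/2) powr \<gamma>" .
    have Q: "(s/2) powr \<gamma> > 0" using ss by simp
    have "b / (exp (-\<beta> * u) * s / 2) powr \<gamma> = B1 * exp (\<beta> * \<gamma> * u)"
      unfolding P B1_def using Q by (simp add: exp_minus divide_simps)
    also have "\<dots> \<le> B1 * exp (u/2)"
    proof -
      have "\<beta> * \<gamma> * u \<le> 1/2 * u" using bg u0 by (intro mult_right_mono) auto
      then show ?thesis using B1 by simp
    qed
    also have "\<dots> \<le> \<alpha> * exp u"
    proof -
      have "2 * ln (B1 / \<alpha>) \<le> u" using u unfolding uL_def by linarith
      then have "exp (ln (B1 / \<alpha>)) \<le> exp (u/2)" by simp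
      then have "B1 / \<alpha> \<le> exp (u/2)" using B1 al by simp
      then have "B1 \<le> \<alpha> * exp (u/2)" using al by (simp add: divide_le_eq mult.commute)
      then have "B1 * exp (u/2) \<le> \<alpha> * exp (u/2) * exp (u/2)" by simp
      also have "\<dots> = \<alpha> * exp u" by (simp add: mult.assoc exp_add[symmetric])
      finally show ?thesis .
    qed
    finally show "b / (exp (-\<beta> * u) * s / 2) powr \<gamma> \<le> \<alpha> * exp u" .
  qed
  then show ?thesis by blast
qed


lemma key:
  fixes f :: "complex \<Rightarrow> complex"
  assumes holf: "f holomorphic_on {z. 0 < Re z}"
    and bound: "\<forall>\<delta> n z. 0 < \<delta> \<and> \<delta> < pi/2 \<and> z \<in> sector (-pi/2 + \<delta>) (pi/2 - \<delta>) \<and> cmod z > \<sigma> \<longrightarrow>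
             cmod (f z) \<le> K * Mdelta M b \<gamma> \<delta> * fact n / (a ^ n * cmod z ^ (n+1))"
    and a0: "a > 0" and K0: "K > 0" and M0: "M > 0" and bb: "b > 0" and g0: "\<gamma> > 0" and s0: "\<sigma> > 0"
  shows "\<forall>z. 0 < Re z \<longrightarrow> f z = 0"
proof -
  define \<beta> where "\<beta> = 1 / (2 * \<gamma> + 2)"
  define \<alpha> where "\<alpha> = a / (2 * exp 1)"
  define C3 where "C3 = K * M * exp 1"
  have b0: "\<beta> > 0" unfolding \<beta>_def using g0 by simp
  have b1: "\<beta> \<le> 1/2" unfolding \<beta>_def using g0 by (simp add: divide_simps)
  have bg: "\<beta> * \<gamma> \<le> 1/2" unfolding \<beta>_def using g0 by (simp add: divide_simps)
  have ss: "sin (\<beta> * pi / 4) > 0" using b0 b1 pi_gt3 by (intro sin_gt_zero) auto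
  have al: "\<alpha> > 0" unfolding \<alpha>_def using a0 by simp
  have C3: "C3 > 0" unfolding C3_def using K0 M0 by simp
  obtain uL where uL: "\<And>u. u \<ge> uL \<Longrightarrow> \<sigma> < exp u \<and> 1 \<le> exp u \<and> exp (-\<beta> * u) \<le> 1/2 \<and>
            b / (exp (-\<beta> * u) * sin (\<beta> * pi / 4) / 2) powr \<gamma> \<le> \<alpha> * exp u"
    using thresholds[OF s0 b0 g0 bg bb ss al] by blast
  define F where "F = (\<lambda>w. f (exp w))"
  have holF: "F holomorphic_on {w. \<bar>Im w\<bar> < pi/2}"
  proof -
    have "exp ` {w. \<bar>Im w\<bar> < pi/2} \<subseteq> {z. 0 < Re z}"
    proof
      fix z assume "z \<in> exp ` {w. \<bar>Im w\<bar> < pi/2}"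
      then obtain w where w: "\<bar>Im w\<bar> < pi/2" "z = exp w" by auto
      have "cos (Im w) > 0" using w by (intro cos_gt_zero_pi) auto
      then show "z \<in> {z. 0 < Re z}" using w by (simp add: Re_exp)
    qed
    then have "(f \<circ> exp) holomorphic_on {w. \<bar>Im w\<bar> < pi/2}"
      by (intro holomorphic_on_compose_gen[OF _ holf]) (auto intro: holomorphic_intros)
    then show ?thesis unfolding F_def comp_def .
  qed
  have dec: "cmod (F w) \<le> C3 * exp (-\<alpha> * exp (Re w))"
    if "uL \<le> Re w" "\<bar>Im w\<bar> < pi/2" "\<bar>Im (w - exp (- (of_real \<beta> * w)))\<bar> \<le> pi/2" for w
  proof -
    note u = uL[OF that(1)]
    show ?thesis unfolding F_def C3_def \<alpha>_def
    proof (rule decay_pt[OF bound a0 K0 M0 b0 b1])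
      show "\<bar>Im w + exp (- \<beta> * Re w) * sin (\<beta> * Im w)\<bar> \<le> pi / 2"
        using that(3) unfolding phi_parts .
    qed (use u that(2) \<alpha>_def in auto)
  qed
  have zero: "f (exp u1) = 0" if u1: "uL + 1 \<le> u1" for u1
  proof (rule ccontr)
    assume nz: "f (exp u1) \<noteq> 0"
    define c where "c = cmod (f (exp u1))"
    have c0: "c > 0" using nz unfolding c_def by simp
    define \<rho>1 where "\<rho>1 = u1 - exp (-\<beta>*u1)"
    have "exp (-\<beta>*u1) \<le> 1/2" using uL[of u1] u1 by auto
    then have "\<rho>1 > uL" unfolding \<rho>1_def using u1 by linarith
    then have "exp \<rho>1 > exp uL" by simp
    define d where "d = \<alpha>/pi * (exp \<rho>1 - exp uL)"
    have d0: "d > 0" unfolding d_def using al \<open>exp \<rho>1 > exp uL\<close> by simp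
    define E0 where "E0 = ln C3 + \<alpha>/pi * (exp uL * (3 - uL) + exp \<rho>1 * \<rho>1)"
    define U where "U = max (u1 + 1) ((E0 - ln c + 1) / d)"
    have U1: "u1 < U" unfolding U_def by simp
    have "d * U \<ge> E0 - ln c + 1"
    proof -
      have "(E0 - ln c + 1) / d \<le> U" unfolding U_def by simp
      then show ?thesis using d0 by (simp add: divide_le_eq mult.commute)
    qed
    have "c \<le> exp (ln C3 + \<alpha>/pi * (exp uL * (U - uL + 3)
            + exp (u1 - exp (-\<beta>*u1)) * ((u1 - exp (-\<beta>*u1)) - U)))"
      unfolding c_def using maxmod[OF holF b0 b1 _ dec C3 al u1 U1] uL[of uL]
      unfolding F_def by (simp add: exp_of_real)
    also have "ln C3 + \<alpha>/pi * (exp uL * (U - uL + 3)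
            + exp (u1 - exp (-\<beta>*u1)) * ((u1 - exp (-\<beta>*u1)) - U)) = E0 - d * U"
      unfolding E0_def d_def \<rho>1_def[symmetric] by (simp add: algebra_simps add_divide_distrib diff_divide_distrib)
    finally have "c \<le> exp (E0 - d * U)" .
    also have "\<dots> \<le> exp (ln c - 1)" using \<open>d * U \<ge> E0 - ln c + 1\<close> by simp
    also have "\<dots> < exp (ln c)" by simp
    also have "\<dots> = c" using c0 by simp
    finally show False by simp
  qed
  show ?thesis
  proof (intro allI impI)
    fix z :: complex assume z: "0 < Re z"
    define X where "X = exp (uL + 1)"
    define Z where "Z = {w::complex. \<exists>x::real. w = of_real x \<and> X < x}"
    show "f z = 0"
    proof (rule analytic_continuation[OF holf open_halfspace_Re_gt connected_halfspace_Re_gt])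
      show "Z \<subseteq> {z. 0 < Re z}" unfolding Z_def X_def by auto (smt (verit) exp_gt_zero)
      show "of_real (X + 1) \<in> {z. 0 < Re z}" unfolding X_def by simp (smt (verit) exp_gt_zero)
      show "of_real (X + 1) islimpt Z"
        unfolding islimpt_approachable
      proof (intro allI impI)
        fix e :: real assume e: "e > 0"
        define x' where "x' = X + 1 + min (e/2) 1"
        have "X < x'" unfolding x'_def using e by simp
        then have "complex_of_real x' \<in> Z" unfolding Z_def by blast
        moreover have "complex_of_real x' \<noteq> of_real (X + 1)" unfolding x'_def using e by simp
        moreover have "dist (complex_of_real x') (of_real (X + 1)) < e"
          unfolding x'_def dist_complex_def using e by (simp add: norm_of_real[symmetric] of_real_diff[symmetric] del: of_real_diff)
        ultimately show "\<exists>x'\<in>Z. x' \<noteq> of_real (X + 1) \<and> dist x' (of_real (X + 1)) < e" by blast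
      qed
      show "\<And>w. w \<in> Z \<Longrightarrow> f w = 0"
      proof -
        fix w assume "w \<in> Z"
        then obtain x where x: "w = of_real x" "X < x" unfolding Z_def by auto
        have xpos: "x > 0" using x unfolding X_def by (smt (verit) exp_gt_zero)
        have "uL + 1 \<le> ln x" using x xpos unfolding X_def by (simp add: ln_ge_iff)
        then have "f (exp (of_real (ln x))) = 0" using zero by (simp add: exp_of_real)
        then show "f w = 0" using x xpos by (simp add: exp_of_real)
      qed
      show "z \<in> {z. 0 < Re z}" using z by simp
    qed
  qed
qed


lemma combine_le:
  fixes Ki Md fn r ai a :: real
  assumes "Ki > 0" "Md > 0" "fn > 0" "r > 0" "0 < a" "a \<le> ai"
  shows "Ki * Md * fn / (ai ^ n * r ^ (n+1)) \<le> Ki * Md * fn / (a ^ n * r ^ (n+1))"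
proof -
  have "a ^ n \<le> ai ^ n" using assms by (intro power_mono) auto
  then have "a ^ n * r ^ (n+1) \<le> ai ^ n * r ^ (n+1)" using assms by (intro mult_right_mono) auto
  moreover have "0 < a ^ n * r ^ (n+1)" using assms by simp
  ultimately show ?thesis using assms by (intro divide_left_mono) auto
qed

theorem mainTheorem2:
  fixes M b \<gamma> :: real and p :: "nat \<Rightarrow> complex" and P1 P2 :: "complex \<Rightarrow> complex"
  assumes "M > 0" and "b > 0" and "\<gamma> > 0"
    and "P1 holomorphic_on sector (-pi/2) (pi/2)"
    and "P2 holomorphic_on sector (-pi/2) (pi/2)"
    and "\<exists>a \<sigma> K. a > 0 \<and> \<sigma> > 0 \<and> K > 0 \<and>
          (\<forall>\<delta> n z. 0 < \<delta> \<and> \<delta> < pi/2 \<and> z \<in> sector (-pi/2 + \<delta>) (pi/2 - \<delta>) \<and> cmod z > \<sigma> \<longrightarrow>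
             cmod (P1 z - (\<Sum>k<n. p k / z ^ (k+1)))
               \<le> K * Mdelta M b \<gamma> \<delta> * fact n / (a ^ n * cmod z ^ (n+1)))"
    and "\<exists>a \<sigma> K. a > 0 \<and> \<sigma> > 0 \<and> K > 0 \<and>
          (\<forall>\<delta> n z. 0 < \<delta> \<and> \<delta> < pi/2 \<and> z \<in> sector (-pi/2 + \<delta>) (pi/2 - \<delta>) \<and> cmod z > \<sigma> \<longrightarrow>
             cmod (P2 z - (\<Sum>k<n. p k / z ^ (k+1)))
               \<le> K * Mdelta M b \<gamma> \<delta> * fact n / (a ^ n * cmod z ^ (n+1)))"
  shows "\<forall>z \<in> sector (-pi/2) (pi/2). P1 z = P2 z"
proof -
  obtain a1 \<sigma>1 K1 where h1: "a1 > 0" "\<sigma>1 > 0" "K1 > 0"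
    "\<forall>\<delta> n z. 0 < \<delta> \<and> \<delta> < pi/2 \<and> z \<in> sector (-pi/2 + \<delta>) (pi/2 - \<delta>) \<and> cmod z > \<sigma>1 \<longrightarrow>
             cmod (P1 z - (\<Sum>k<n. p k / z ^ (k+1)))
               \<le> K1 * Mdelta M b \<gamma> \<delta> * fact n / (a1 ^ n * cmod z ^ (n+1))"
    using assms(6) by blast
  obtain a2 \<sigma>2 K2 where h2: "a2 > 0" "\<sigma>2 > 0" "K2 > 0"
    "\<forall>\<delta> n z. 0 < \<delta> \<and> \<delta> < pi/2 \<and> z \<in> sector (-pi/2 + \<delta>) (pi/2 - \<delta>) \<and> cmod z > \<sigma>2 \<longrightarrow>
             cmod (P2 z - (\<Sum>k<n. p k / z ^ (k+1)))
               \<le> K2 * Mdelta M b \<gamma> \<delta> * fact n / (a2 ^ n * cmod z ^ (n+1))"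
    using assms(7) by blast
  define f where "f = (\<lambda>z. P1 z - P2 z)"
  define a where "a = min a1 a2"
  define \<sigma> where "\<sigma> = max \<sigma>1 \<sigma>2"
  define K where "K = K1 + K2"
  have holf: "f holomorphic_on {z. 0 < Re z}"
    unfolding f_def using assms(4,5) sector_half by (auto intro: holomorphic_intros)
  have bound: "\<forall>\<delta> n z. 0 < \<delta> \<and> \<delta> < pi/2 \<and> z \<in> sector (-pi/2 + \<delta>) (pi/2 - \<delta>) \<and> cmod z > \<sigma> \<longrightarrow>
             cmod (f z) \<le> K * Mdelta M b \<gamma> \<delta> * fact n / (a ^ n * cmod z ^ (n+1))"
  proof (intro allI impI)
    fix \<delta> :: real and n :: nat and z :: complex
    assume H: "0 < \<delta> \<and> \<delta> < pi/2 \<and> z \<in> sector (-pi/2 + \<delta>) (pi/2 - \<delta>) \<and> cmod z > \<sigma>"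
    define S where "S = (\<Sum>k<n. p k / z ^ (k+1))"
    have Md: "Mdelta M b \<gamma> \<delta> > 0" unfolding Mdelta_def using assms(1) by simp
    have r: "cmod z > 0" using H h1(2) unfolding \<sigma>_def by linarith
    have fn: "(fact n :: real) > 0" by simp
    have e1: "cmod (P1 z - S) \<le> K1 * Mdelta M b \<gamma> \<delta> * fact n / (a1 ^ n * cmod z ^ (n+1))"
      using h1(4) H unfolding S_def \<sigma>_def by auto
    have e2: "cmod (P2 z - S) \<le> K2 * Mdelta M b \<gamma> \<delta> * fact n / (a2 ^ n * cmod z ^ (n+1))"
      using h2(4) H unfolding S_def \<sigma>_def by auto
    have "cmod (f z) \<le> cmod (P1 z - S) + cmod (P2 z - S)"
      unfolding f_def using norm_triangle_ineq4[of "P1 z - S" "P2 z - S"] by simp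
    also have "\<dots> \<le> K1 * Mdelta M b \<gamma> \<delta> * fact n / (a ^ n * cmod z ^ (n+1))
                   + K2 * Mdelta M b \<gamma> \<delta> * fact n / (a ^ n * cmod z ^ (n+1))"
      using e1 e2 combine_le[OF h1(3) Md fn r, of a a1 n] combine_le[OF h2(3) Md fn r, of a a2 n]
        h1(1) h2(1) unfolding a_def by auto
    also have "\<dots> = K * Mdelta M b \<gamma> \<delta> * fact n / (a ^ n * cmod z ^ (n+1))"
      unfolding K_def by (simp add: add_divide_distrib distrib_right)
    finally show "cmod (f z) \<le> K * Mdelta M b \<gamma> \<delta> * fact n / (a ^ n * cmod z ^ (n+1))" .
  qed
  have "\<forall>z. 0 < Re z \<longrightarrow> f z = 0"
    by (rule key[OF holf bound]) (use h1 h2 assms(1-3) in \<open>auto simp: a_def K_def \<sigma>_def\<close>)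
  then show ?thesis unfolding sector_half f_def by auto
qed

end
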